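(* Let $I=(N,O,\succsim)$ be a general instance. If a generalized random matching $p$ is non-wasteful, then in each of its decompositions all generalized deterministic matchings are non-wasteful.
   Context: $N$ is a finite set of $n$ agents and $O$ a finite set of $m$ objects ($m,n$ arbitrary); $\emptyset$ is the null object. Each agent $i$ has a weak order $\succsim_i$ over $O\cup\{\emptyset\}$ and each object $o$ a weak order $\succsim_o$ over $N\cup\{\emptyset\}$, with no object indifferent to $\emptyset$ for any agent and vice versa. $(i,o)$ is an acceptable pair if $o\succ_i\emptyset$ and $i\succ_o\emptyset$. A generalized random matching is an $n\times m$ matrix $p$ with $p(i,o)\ge0$, row sums $\le1$ and column sums $\le1$; it is deterministic if its entries are in $\{0,1\}$. A decomposition of $p$ is a representation $p=\sum_{j=1}^k\lambda_jP_j$ with $P_j$ generalized deterministic matchings, $\lambda_j\in(0,1]$, $\sum_j\lambda_j=1$. $p$ is non-wasteful if there is no acceptable pair $(i,o)$ with $\sum_{o':o'\succsim_i o}p(i,o')<1$ and $\sum_{j\in N}p(j,o)<1$. *)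

theory Defs
  imports Complex_Main
begin

text \<open>The null object / null agent is modelled by None (option type).\<close>

definition weak_order_on :: "'a set \<Rightarrow> ('a \<Rightarrow> 'a \<Rightarrow> bool) \<Rightarrow> bool" where
  "weak_order_on A R \<longleftrightarrow>
     (\<forall>x\<in>A. \<forall>y\<in>A. R x y \<or> R y x) \<and>
     (\<forall>x\<in>A. \<forall>y\<in>A. \<forall>z\<in>A. R x y \<longrightarrow> R y z \<longrightarrow> R x z)"

definition strict :: "('a \<Rightarrow> 'a \<Rightarrow> bool) \<Rightarrow> 'a \<Rightarrow> 'a \<Rightarrow> bool" where
  "strict R x y \<longleftrightarrow> R x y \<and> \<not> R y x"

definition general_instance ::
  "'i set \<Rightarrow> 'o set \<Rightarrow> ('i \<Rightarrow> 'o option \<Rightarrow> 'o option \<Rightarrow> bool) \<Rightarrow> ('o \<Rightarrow> 'i option \<Rightarrow> 'i option \<Rightarrow> bool) \<Rightarrow> bool" where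
  "general_instance N Obj Ra Ro \<longleftrightarrow>
     finite N \<and> finite Obj \<and>
     (\<forall>i\<in>N. weak_order_on (insert None (Some ` Obj)) (Ra i)) \<and>
     (\<forall>b\<in>Obj. weak_order_on (insert None (Some ` N)) (Ro b)) \<and>
     (\<forall>i\<in>N. \<forall>b\<in>Obj. \<not> (Ra i (Some b) None \<and> Ra i None (Some b))) \<and>
     (\<forall>b\<in>Obj. \<forall>i\<in>N. \<not> (Ro b (Some i) None \<and> Ro b None (Some i)))"

definition acceptable ::
  "('i \<Rightarrow> 'o option \<Rightarrow> 'o option \<Rightarrow> bool) \<Rightarrow> ('o \<Rightarrow> 'i option \<Rightarrow> 'i option \<Rightarrow> bool) \<Rightarrow> 'i \<Rightarrow> 'o \<Rightarrow> bool" where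
  "acceptable Ra Ro i b \<longleftrightarrow> strict (Ra i) (Some b) None \<and> strict (Ro b) (Some i) None"

text \<open>A generalized random matching: an N \<times> Obj matrix (only entries on N \<times> Obj matter).\<close>
definition gen_random_matching :: "'i set \<Rightarrow> 'o set \<Rightarrow> ('i \<Rightarrow> 'o \<Rightarrow> real) \<Rightarrow> bool" where
  "gen_random_matching N Obj p \<longleftrightarrow>
     (\<forall>i\<in>N. \<forall>b\<in>Obj. p i b \<ge> 0) \<and>
     (\<forall>i\<in>N. (\<Sum>b\<in>Obj. p i b) \<le> 1) \<and>
     (\<forall>b\<in>Obj. (\<Sum>i\<in>N. p i b) \<le> 1)"

definition gen_det_matching :: "'i set \<Rightarrow> 'o set \<Rightarrow> ('i \<Rightarrow> 'o \<Rightarrow> real) \<Rightarrow> bool" where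
  "gen_det_matching N Obj P \<longleftrightarrow>
     gen_random_matching N Obj P \<and> (\<forall>i\<in>N. \<forall>b\<in>Obj. P i b \<in> {0, 1})"

definition decomposition ::
  "'i set \<Rightarrow> 'o set \<Rightarrow> ('i \<Rightarrow> 'o \<Rightarrow> real) \<Rightarrow> nat \<Rightarrow> (nat \<Rightarrow> real) \<Rightarrow> (nat \<Rightarrow> 'i \<Rightarrow> 'o \<Rightarrow> real) \<Rightarrow> bool" where
  "decomposition N Obj p k lam P \<longleftrightarrow>
     (\<forall>j<k. gen_det_matching N Obj (P j)) \<and>
     (\<forall>j<k. 0 < lam j \<and> lam j \<le> 1) \<and>
     (\<Sum>j<k. lam j) = 1 \<and>
     (\<forall>i\<in>N. \<forall>b\<in>Obj. p i b = (\<Sum>j<k. lam j * P j i b))"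

definition non_wasteful ::
  "'i set \<Rightarrow> 'o set \<Rightarrow> ('i \<Rightarrow> 'o option \<Rightarrow> 'o option \<Rightarrow> bool) \<Rightarrow> ('o \<Rightarrow> 'i option \<Rightarrow> 'i option \<Rightarrow> bool)
     \<Rightarrow> ('i \<Rightarrow> 'o \<Rightarrow> real) \<Rightarrow> bool" where
  "non_wasteful N Obj Ra Ro p \<longleftrightarrow>
     \<not> (\<exists>i\<in>N. \<exists>b\<in>Obj. acceptable Ra Ro i b \<and>
          (\<Sum>b'\<in>{b'\<in>Obj. Ra i (Some b') (Some b)}. p i b') < 1 \<and>
          (\<Sum>j\<in>N. p j b) < 1)"

end

theory Submission
  imports Defs
begin

lemma zero01:
  fixes f :: "'a \<Rightarrow> real"
  assumes "finite S" "\<forall>x\<in>S. f x \<in> {0,1}" "sum f S < 1"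
  shows "sum f S = 0"
proof -
  have "\<forall>x\<in>S. f x = 0"
  proof
    fix x assume x: "x \<in> S"
    show "f x = 0"
    proof (rule ccontr)
      assume "f x \<noteq> 0"
      hence "f x = 1" using assms(2) x by auto
      moreover have "f x \<le> sum f S"
        using assms x by (intro member_le_sum) auto
      ultimately show False using assms(3) by simp
    qed
  qed
  thus ?thesis by simp
qed

lemma convex_lt:
  fixes lam Q :: "nat \<Rightarrow> real"
  assumes "\<forall>l<k. 0 < lam l" "(\<Sum>l<k. lam l) = 1" "j < k" "\<forall>l<k. Q l \<le> 1" "Q j = 0"
  shows "(\<Sum>l<k. lam l * Q l) < 1"
proof -
  have "(\<Sum>l<k. lam l * Q l) \<le> (\<Sum>l<k. lam l * (if l = j then 0 else 1))"
    using assms by (intro sum_mono) (auto intro: mult_left_mono less_imp_le)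
  also have "\<dots> = (\<Sum>l<k. lam l) - lam j"
  proof -
    have "(\<Sum>l<k. lam l * (if l = j then 0 else 1)) = (\<Sum>l<k. lam l - (if l = j then lam l else 0))"
      by (intro sum.cong) auto
    also have "\<dots> = (\<Sum>l<k. lam l) - lam j" using assms(3)
      by (simp add: sum_subtractf)
    finally show ?thesis .
  qed
  finally show ?thesis using assms by force
qed

theorem lemma6:
  fixes N :: "'i set" and Obj :: "'o set"
    and Ra :: "'i \<Rightarrow> 'o option \<Rightarrow> 'o option \<Rightarrow> bool"
    and Ro :: "'o \<Rightarrow> 'i option \<Rightarrow> 'i option \<Rightarrow> bool"
    and p :: "'i \<Rightarrow> 'o \<Rightarrow> real"
    and k :: nat and lam :: "nat \<Rightarrow> real" and P :: "nat \<Rightarrow> 'i \<Rightarrow> 'o \<Rightarrow> real"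
  assumes "general_instance N Obj Ra Ro"
    and "gen_random_matching N Obj p"
    and "non_wasteful N Obj Ra Ro p"
    and "decomposition N Obj p k lam P"
  shows "\<forall>j<k. non_wasteful N Obj Ra Ro (P j)"
proof (intro allI impI)
  fix j assume j: "j < k"
  have fin: "finite N" "finite Obj" using assms(1) unfolding general_instance_def by auto
  have det: "\<forall>l<k. gen_det_matching N Obj (P l)" and lam: "\<forall>l<k. 0 < lam l"
    and lsum: "(\<Sum>l<k. lam l) = 1" and peq: "\<forall>i\<in>N. \<forall>b\<in>Obj. p i b = (\<Sum>l<k. lam l * P l i b)"
    using assms(4) unfolding decomposition_def by auto
  show "non_wasteful N Obj Ra Ro (P j)"
    unfolding non_wasteful_def
  proof
    assume "\<exists>i\<in>N. \<exists>b\<in>Obj. acceptable Ra Ro i b \<and>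
          (\<Sum>b'\<in>{b'\<in>Obj. Ra i (Some b') (Some b)}. P j i b') < 1 \<and>
          (\<Sum>i'\<in>N. P j i' b) < 1"
    then obtain i b where i: "i \<in> N" and b: "b \<in> Obj" and acc: "acceptable Ra Ro i b"
      and s1: "(\<Sum>b'\<in>{b'\<in>Obj. Ra i (Some b') (Some b)}. P j i b') < 1"
      and s2: "(\<Sum>i'\<in>N. P j i' b) < 1" by blast
    define S where "S = {b'\<in>Obj. Ra i (Some b') (Some b)}"
    have finS: "finite S" using fin unfolding S_def by auto
    have SO: "S \<subseteq> Obj" unfolding S_def by auto
    have Pj: "gen_det_matching N Obj (P j)" using det j by auto
    have z1: "(\<Sum>b'\<in>S. P j i b') = 0"
      using zero01[OF finS _ s1[folded S_def]] Pj i SO unfolding gen_det_matching_def by auto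
    have z2: "(\<Sum>i'\<in>N. P j i' b) = 0"
      using zero01[OF fin(1) _ s2] Pj b unfolding gen_det_matching_def by auto
    have q1: "(\<Sum>b'\<in>S. p i b') < 1"
    proof -
      have "(\<Sum>b'\<in>S. p i b') = (\<Sum>b'\<in>S. \<Sum>l<k. lam l * P l i b')"
        using peq i SO by (intro sum.cong) auto
      also have "\<dots> = (\<Sum>l<k. lam l * (\<Sum>b'\<in>S. P l i b'))"
        by (subst sum.swap) (simp add: sum_distrib_left)
      also have "\<dots> < 1"
      proof (rule convex_lt[OF lam lsum j])
        show "\<forall>l<k. (\<Sum>b'\<in>S. P l i b') \<le> 1"
        proof (intro allI impI)
          fix l assume "l < k"
          hence g: "gen_random_matching N Obj (P l)" using det unfolding gen_det_matching_def by auto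
          have "(\<Sum>b'\<in>S. P l i b') \<le> (\<Sum>b'\<in>Obj. P l i b')"
            using g i SO fin unfolding gen_random_matching_def by (intro sum_mono2) auto
          also have "\<dots> \<le> 1" using g i unfolding gen_random_matching_def by auto
          finally show "(\<Sum>b'\<in>S. P l i b') \<le> 1" .
        qed
      qed (rule z1)
      finally show ?thesis .
    qed
    have q2: "(\<Sum>i'\<in>N. p i' b) < 1"
    proof -
      have "(\<Sum>i'\<in>N. p i' b) = (\<Sum>i'\<in>N. \<Sum>l<k. lam l * P l i' b)"
        using peq b by (intro sum.cong) auto
      also have "\<dots> = (\<Sum>l<k. lam l * (\<Sum>i'\<in>N. P l i' b))"
        by (subst sum.swap) (simp add: sum_distrib_left)
      also have "\<dots> < 1"
      proof (rule convex_lt[OF lam lsum j])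
        show "\<forall>l<k. (\<Sum>i'\<in>N. P l i' b) \<le> 1"
          using det b unfolding gen_det_matching_def gen_random_matching_def by auto
      qed (rule z2)
      finally show ?thesis .
    qed
    from assms(3) i b acc q1 q2 show False
      unfolding non_wasteful_def S_def by blast
  qed
qed

end
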